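(* Let $n\ge 2$, let $X$ be a real $n\times n$ matrix with $\|X\|=1$, and define the linear map $T:\mathfrak{gl}(n,\mathbb R)\to\mathfrak{gl}(n,\mathbb R)$ by $T(Y)=[X^T,[X,Y]]$. Let $\alpha$ be the maximum eigenvalue of $T$. Then the multiplicity of the eigenvalue $\alpha$ is at least $2$.
   Context: $\mathfrak{gl}(n,\mathbb R)$ is the space of real $n\times n$ matrices with the Frobenius inner product $\langle Y_1,Y_2\rangle=\sum_{i,j}(Y_1)_{ij}(Y_2)_{ij}$, with respect to which $T$ is symmetric (so its eigenvalues are real). $[A,B]=AB-BA$, $X^T$ is the transpose, and $\|X\|^2=\sum_{i,j}x_{ij}^2$. *)

theory Defs
  imports "HOL-Analysis.Analysis"
begin

text \<open>Matrices in gl(n,R) are represented as real^'n^'n; the inner product on this type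
is the Frobenius inner product and norm is the Frobenius norm.\<close>

definition commutator :: "real^'n^'n \<Rightarrow> real^'n^'n \<Rightarrow> real^'n^'n" where
  "commutator A B = A ** B - B ** A"

definition Top :: "real^'n^'n \<Rightarrow> real^'n^'n \<Rightarrow> real^'n^'n" where
  "Top X Y = commutator (transpose X) (commutator X Y)"

definition is_eigenvalue :: "('a::real_vector \<Rightarrow> 'a) \<Rightarrow> real \<Rightarrow> bool" where
  "is_eigenvalue T \<mu> \<longleftrightarrow> (\<exists>v. v \<noteq> 0 \<and> T v = \<mu> *\<^sub>R v)"

definition eigenspace :: "('a::real_vector \<Rightarrow> 'a) \<Rightarrow> real \<Rightarrow> 'a set" where
  "eigenspace T \<mu> = {v. T v = \<mu> *\<^sub>R v}"

end

theory Submission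
  imports Defs
begin

lemma transpose_diff': "transpose (A - B) = transpose A - (transpose B :: real^'n^'n)"
  by (simp add: transpose_def vec_eq_iff)

lemma transpose_uminus': "transpose (- A) = - (transpose A :: real^'n^'n)"
  by (simp add: transpose_def vec_eq_iff)

lemma mm_diff_r: "((A::real^'n^'n) - B) ** C = A ** C - B ** C"
  by (simp add: matrix_matrix_mult_def vec_eq_iff sum_subtractf left_diff_distrib)

lemma mm_diff_l: "(C::real^'n^'n) ** (A - B) = C ** A - C ** B"
  by (simp add: matrix_matrix_mult_def vec_eq_iff sum_subtractf right_diff_distrib)

lemma mm_scale_r: "(C::real^'n^'n) ** (c *\<^sub>R A) = c *\<^sub>R (C ** A)"
  by (simp add: matrix_matrix_mult_def vec_eq_iff sum_distrib_left mult.left_commute)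

lemma mm_scale_l: "(c *\<^sub>R A) ** (C::real^'n^'n) = c *\<^sub>R (A ** C)"
  by (simp add: matrix_matrix_mult_def vec_eq_iff sum_distrib_left mult.assoc)

lemma inner_trace: "transpose (A::real^'n^'n) \<bullet> B = trace (A ** B)"
  unfolding inner_vec_def trace_def matrix_matrix_mult_def transpose_def
  by simp (rule sum.swap)

definition LL :: "real^'n^'n \<Rightarrow> real^'n^'n \<Rightarrow> real^'n^'n" where
  "LL X Y = transpose (commutator X Y)"

lemma LL_scale: "LL X (c *\<^sub>R Y) = c *\<^sub>R LL X Y"
  by (simp add: LL_def commutator_def mm_scale_r mm_scale_l transpose_scalar
      flip: scaleR_diff_right)

lemma LL_zero: "LL X 0 = 0"
  using LL_scale[of X 0 0] by simp

lemma LL_LL: "LL X (LL X Y) = - Top X Y"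
  by (simp add: LL_def Top_def commutator_def transpose_diff' matrix_transpose_mul
      mm_diff_r mm_diff_l)

lemma LL_orth: "LL X Y \<bullet> Y = 0"
proof -
  have "trace ((X**Y)**Y) = trace (Y**(X**Y))" by (rule trace_mul_sym)
  thus ?thesis by (simp add: LL_def inner_trace commutator_def mm_diff_r trace_sub matrix_mul_assoc)
qed

lemma dim2:
  fixes S :: "'a::euclidean_space set"
  assumes "u \<in> S" "v \<in> S" "u \<noteq> 0" "\<forall>c. v \<noteq> c *\<^sub>R u"
  shows "2 \<le> dim S"
proof -
  have vu: "v \<noteq> u" using assms(4)[rule_format, of 1] by simp
  have vs: "v \<notin> span {u}" unfolding span_singleton using assms(4) by blast
  have "u \<notin> span {}" using assms(3) by simp
  hence "independent {u}" by (rule independent_insertI) (rule independent_empty)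
  hence ind: "independent {v, u}"
    using vs by (rule independent_insertI[rotated])
  have sub: "{v, u} \<subseteq> S" using assms(1,2) by blast
  have "card {v, u} \<le> dim S"
    by (rule independent_card_le_dim[OF sub ind])
  moreover have "card {v, u} = 2" using vu by simp
  ultimately show ?thesis by linarith
qed

lemma mat1_nz: "(mat 1 :: real^'n^'n) \<noteq> 0"
proof
  fix i :: 'n
  assume "(mat 1 :: real^'n^'n) = 0"
  hence "(mat 1 :: real^'n^'n) $ i $ i = 0" by simp
  thus False by (simp add: mat_def)
qed

theorem mainTheorem6:
  fixes X :: "real^'n^'n" and \<alpha> :: real
  assumes "CARD('n) \<ge> 2"
    and "norm X = 1"
    and "is_eigenvalue (Top X) \<alpha>"
    and "\<forall>\<mu>. is_eigenvalue (Top X) \<mu> \<longrightarrow> \<mu> \<le> \<alpha>"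
  shows "dim (eigenspace (Top X) \<alpha>) \<ge> 2"
proof (cases "\<alpha> = 0")
  case False
  obtain Y where Y: "Y \<noteq> 0" "Top X Y = \<alpha> *\<^sub>R Y"
    using assms(3) unfolding is_eigenvalue_def by blast
  have LLY: "LL X (LL X Y) = - \<alpha> *\<^sub>R Y" using LL_LL[of X Y] Y by simp
  have "Top X (LL X Y) = - LL X (LL X (LL X Y))" using LL_LL[of X "LL X Y"] by simp
  also have "\<dots> = \<alpha> *\<^sub>R LL X Y" using LL_scale[of X "-\<alpha>" Y] by (simp add: LLY)
  finally have T: "Top X (LL X Y) = \<alpha> *\<^sub>R LL X Y" .
  have nz: "LL X Y \<noteq> 0"
  proof
    assume "LL X Y = 0"
    hence "- \<alpha> *\<^sub>R Y = 0" using LLY LL_zero by metis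
    thus False using False Y(1) by simp
  qed
  have "\<forall>c. Y \<noteq> c *\<^sub>R LL X Y"
  proof
    fix c show "Y \<noteq> c *\<^sub>R LL X Y"
    proof
      assume h: "Y = c *\<^sub>R LL X Y"
      have "Y \<bullet> Y = c * (LL X Y \<bullet> Y)" by (subst (1) h) simp
      hence "Y \<bullet> Y = 0" using LL_orth[of X Y] by simp
      thus False using Y(1) by simp
    qed
  qed
  thus ?thesis using T Y nz
    by (intro dim2[of "LL X Y" _ Y]) (auto simp: eigenspace_def)
next
  case True
  have I: "Top X (mat 1) = 0"
    by (simp add: Top_def commutator_def)
  show ?thesis
  proof (cases "\<exists>c. X = c *\<^sub>R mat 1")
    case False
    have "Top X X = 0" by (simp add: Top_def commutator_def)
    hence "X \<in> eigenspace (Top X) \<alpha>" using True by (simp add: eigenspace_def)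
    moreover have "mat 1 \<in> eigenspace (Top X) \<alpha>" using I True by (simp add: eigenspace_def)
    ultimately show ?thesis using False mat1_nz by (intro dim2[of "mat 1" _ X]) auto
  next
    case True2: True
    then obtain c where c: "X = c *\<^sub>R mat 1" by blast
    obtain a b :: 'n where ab: "a \<noteq> b"
    proof -
      have "\<not> card (UNIV::'n set) \<le> Suc 0" using assms(1) by simp
      hence "\<exists>a b::'n. a \<noteq> b" by (simp add: card_le_Suc0_iff_eq)
      thus ?thesis using that by blast
    qed
    define E :: "real^'n^'n" where "E = (\<chi> i j. if i = a \<and> j = a then 1 else 0)"
    have "Top X E = 0"
      by (simp add: Top_def commutator_def c mm_scale_r mm_scale_l)
    moreover have "\<forall>k. E \<noteq> k *\<^sub>R mat 1"
    proof
      fix k show "E \<noteq> k *\<^sub>R mat 1"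
      proof
        assume h: "E = k *\<^sub>R mat 1"
        have "E $ a $ a = k" by (subst h) (simp add: mat_def)
        moreover have "E $ b $ b = k" by (subst h) (simp add: mat_def)
        ultimately show False using ab by (simp add: E_def)
      qed
    qed
    moreover have "mat 1 \<in> eigenspace (Top X) \<alpha>" using I True by (simp add: eigenspace_def)
    ultimately show ?thesis using True mat1_nz
      by (intro dim2[of "mat 1" _ E]) (auto simp: eigenspace_def)
  qed
qed

end
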